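(* Let $\widehat{G}$ be a signed complete bigraph. Then $\widehat{G}$ is chordal if and only if it does not contain any signed graph in $F_1\cup F_2\cup F_3\cup F_4$ as an induced subgraph, where: $F_1$ consists of the single signed graph $K_{2,2}$ (a 4-cycle) with all four edges negative; $F_2$: the complete bigraph with parts $\{a_1,a_2\}$, $\{b_1,b_2,b_3\}$, with $a_1b_1,a_1b_2,a_2b_2,a_2b_3$ negative and $a_1b_3,a_2b_1$ free; $F_3$: the complete bigraph with parts $\{a_1,a_2\}$, $\{b_1,b_2,b_3,b_4\}$, with $a_1b_1,a_1b_2,a_2b_3,a_2b_4$ negative and the other four edges free; $F_4$: the complete bigraph with parts $\{a_1,a_2,a_3\}$, $\{b_1,b_2,b_3\}$, with $a_1b_1,a_2b_2,a_3b_3$ negative and the other six edges free.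
   Context: A signed graph is a finite simple graph each of whose edges is assigned a sign, positive or negative. A signed bigraph is a signed graph whose underlying graph is bipartite, with bipartition $(X,Y)$; it is a signed complete bigraph if the underlying graph is complete bipartite. An induced subgraph is obtained by deleting vertices only (signs are inherited); $\widehat G$ contains $H$ as an induced subgraph if some induced subgraph of $\widehat G$ is isomorphic to $H$ via a sign-preserving isomorphism. A signed graph is positive if all its edges are positive. In a bigraph with bipartition $(X,Y)$, a subgraph $H$ is a biclique if every vertex of $V(H)\cap X$ is adjacent to every vertex of $V(H)\cap Y$. For an edge $uv$, $N(uv)=(N(u)\cup N(v))\setminus\{u,v\}$. An edge $uv$ of a signed bigraph is signed simplicial if $N(uv)$ induces a positive biclique. A signed bigraph $\widehat G$ is chordal if its edges can be ordered $e_1,\dots,e_m$ so that each $e_i$ is signed simplicial in the signed bigraph $\widehat G-\{e_1,\dots,e_{i-1}\}$ obtained by deleting these edges (but no vertices). A family described by a graph with some edges declared negative, some positive, and the rest declared free, is the set of all signed graphs obtained by giving each free edge an arbitrary sign. *)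

theory Defs
  imports Main
begin

(* A signed graph on vertex set V: edge set E (a set of 2-element vertex sets)
   together with a sign function pos on edges (pos e = True: positive, False: negative). *)

definition bi_edges :: "'a set \<Rightarrow> 'a set \<Rightarrow> 'a set set" where
  "bi_edges X Y = {{x, y} | x y. x \<in> X \<and> y \<in> Y}"

definition signed_complete_bigraph :: "'a set \<Rightarrow> 'a set \<Rightarrow> 'a set set \<Rightarrow> bool" where
  "signed_complete_bigraph X Y E \<longleftrightarrow>
     finite X \<and> finite Y \<and> X \<inter> Y = {} \<and> E = bi_edges X Y"

definition nbr :: "'a set set \<Rightarrow> 'a \<Rightarrow> 'a set" where
  "nbr E u = {w. {u, w} \<in> E}"

definition edge_nbr :: "'a set set \<Rightarrow> 'a \<Rightarrow> 'a \<Rightarrow> 'a set" where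
  "edge_nbr E u v = (nbr E u \<union> nbr E v) - {u, v}"

definition positive_biclique :: "'a set \<Rightarrow> 'a set \<Rightarrow> 'a set set \<Rightarrow> ('a set \<Rightarrow> bool) \<Rightarrow> 'a set \<Rightarrow> bool" where
  "positive_biclique X Y E pos S \<longleftrightarrow>
     (\<forall>x \<in> S \<inter> X. \<forall>y \<in> S \<inter> Y. {x, y} \<in> E) \<and>
     (\<forall>f \<in> E. f \<subseteq> S \<longrightarrow> pos f)"

definition signed_simplicial :: "'a set \<Rightarrow> 'a set \<Rightarrow> 'a set set \<Rightarrow> ('a set \<Rightarrow> bool) \<Rightarrow> 'a set \<Rightarrow> bool" where
  "signed_simplicial X Y E pos e \<longleftrightarrow>
     e \<in> E \<and> (\<exists>u v. e = {u, v} \<and> positive_biclique X Y E pos (edge_nbr E u v))"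

definition chordal :: "'a set \<Rightarrow> 'a set \<Rightarrow> 'a set set \<Rightarrow> ('a set \<Rightarrow> bool) \<Rightarrow> bool" where
  "chordal X Y E pos \<longleftrightarrow>
     (\<exists>es. distinct es \<and> set es = E \<and>
        (\<forall>i < length es. signed_simplicial X Y (E - set (take i es)) pos (es ! i)))"

definition contains_induced ::
  "'b set \<Rightarrow> 'b set set \<Rightarrow> ('b set \<Rightarrow> bool) \<Rightarrow> 'a set \<Rightarrow> 'a set set \<Rightarrow> ('a set \<Rightarrow> bool) \<Rightarrow> bool" where
  "contains_induced VH EH posH V E pos \<longleftrightarrow>
     (\<exists>\<phi>. inj_on \<phi> VH \<and> \<phi> ` VH \<subseteq> V \<and>
        (\<forall>a \<in> VH. \<forall>b \<in> VH.
           ({a, b} \<in> EH \<longleftrightarrow> {\<phi> a, \<phi> b} \<in> E) \<and>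
           ({a, b} \<in> EH \<longrightarrow> posH {a, b} = pos {\<phi> a, \<phi> b})))"

(* vertices of the forbidden graphs: a_i = A i, b_j = B j *)
datatype hv = A nat | B nat

definition Kverts :: "nat \<Rightarrow> nat \<Rightarrow> hv set" where
  "Kverts m n = A ` {1..m} \<union> B ` {1..n}"

definition Kedges :: "nat \<Rightarrow> nat \<Rightarrow> hv set set" where
  "Kedges m n = bi_edges (A ` {1..m}) (B ` {1..n})"

(* a family: K_{m,n} with the edges a_i b_j, (i,j) \<in> negs, declared negative, all others free *)
definition family_member :: "nat \<times> nat \<times> (nat \<times> nat) set \<Rightarrow> (hv set \<Rightarrow> bool) \<Rightarrow> bool" where
  "family_member F posH \<longleftrightarrow> (case F of (m, n, negs) \<Rightarrow> \<forall>(i, j) \<in> negs. \<not> posH {A i, B j})"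

definition F1 :: "nat \<times> nat \<times> (nat \<times> nat) set" where
  "F1 = (2, 2, {(1,1), (1,2), (2,1), (2,2)})"
definition F2 :: "nat \<times> nat \<times> (nat \<times> nat) set" where
  "F2 = (2, 3, {(1,1), (1,2), (2,2), (2,3)})"
definition F3 :: "nat \<times> nat \<times> (nat \<times> nat) set" where
  "F3 = (2, 4, {(1,1), (1,2), (2,3), (2,4)})"
definition F4 :: "nat \<times> nat \<times> (nat \<times> nat) set" where
  "F4 = (3, 3, {(1,1), (2,2), (3,3)})"

definition contains_family :: "nat \<times> nat \<times> (nat \<times> nat) set \<Rightarrow> 'a set \<Rightarrow> 'a set set \<Rightarrow> ('a set \<Rightarrow> bool) \<Rightarrow> bool" where
  "contains_family F V E pos \<longleftrightarrow>
     (case F of (m, n, negs) \<Rightarrow>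
        \<exists>posH. family_member F posH \<and> contains_induced (Kverts m n) (Kedges m n) posH V E pos)"

end

theory Submission
  imports Defs
begin

lemma bi_edges_iff: "{a,b} \<in> bi_edges X Y \<longleftrightarrow> (a \<in> X \<and> b \<in> Y \<or> a \<in> Y \<and> b \<in> X)"
  unfolding bi_edges_def by (auto simp: doubleton_eq_iff)

lemma bi_edges_elem: "f \<in> bi_edges X Y \<longleftrightarrow> (\<exists>x y. f = {x,y} \<and> x \<in> X \<and> y \<in> Y)"
  unfolding bi_edges_def by auto

lemma chordal_empty: "chordal X Y {} pos"
  unfolding chordal_def by (rule exI[of _ "[]"]) auto

lemma chordal_step:
  assumes "e \<in> R" "signed_simplicial X Y R pos e" "chordal X Y (R - {e}) pos"
  shows "chordal X Y R pos"
proof -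
  from assms(3) obtain es where es: "distinct es" "set es = R - {e}"
    "\<forall>i<length es. signed_simplicial X Y (R - {e} - set (take i es)) pos (es ! i)"
    unfolding chordal_def by blast
  show ?thesis unfolding chordal_def
  proof (intro exI[of _ "e # es"] conjI allI impI)
    show "distinct (e # es)" using es by auto
    show "set (e # es) = R" using es assms(1) by auto
    fix i assume i: "i < length (e # es)"
    show "signed_simplicial X Y (R - set (take i (e # es))) pos ((e # es) ! i)"
    proof (cases i)
      case 0 then show ?thesis using assms(2) by simp
    next
      case (Suc j)
      have "R - set (take i (e # es)) = R - {e} - set (take j es)" using Suc by auto
      then show ?thesis using es(3) Suc i by simp
    qed
  qed
qed

lemma simp_row:
  assumes disj: "X \<inter> Y = {}" and Xr: "Xr \<subseteq> X" and x0: "x0 \<in> X" "x0 \<notin> Xr"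
    and S: "S \<subseteq> Y" and y: "y \<in> S" and v: "v \<notin> S - {y}"
    and P: "\<forall>x\<in>Xr. \<forall>y\<in>Y. y \<noteq> v \<longrightarrow> pos {x,y}"
  shows "signed_simplicial X Y (bi_edges Xr Y \<union> bi_edges {x0} S) pos {x0,y}"
proof -
  let ?R = "bi_edges Xr Y \<union> bi_edges {x0} S"
  have yY: "y \<in> Y" using S y by auto
  have n1: "nbr ?R x0 = S" unfolding nbr_def using disj Xr x0 S by (auto simp: bi_edges_iff)
  have n2: "nbr ?R y = insert x0 Xr" unfolding nbr_def using disj Xr x0 S y yY by (auto simp: bi_edges_iff)
  have N: "edge_nbr ?R x0 y = (S - {y}) \<union> Xr" unfolding edge_nbr_def n1 n2
    using disj Xr x0 S y yY by auto
  show ?thesis unfolding signed_simplicial_def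
  proof (intro conjI exI)
    show "{x0,y} \<in> ?R" using y by (auto simp: bi_edges_iff)
    show "positive_biclique X Y ?R pos (edge_nbr ?R x0 y)"
      unfolding positive_biclique_def N
    proof (intro conjI ballI impI)
      fix a b assume "a \<in> (S - {y} \<union> Xr) \<inter> X" "b \<in> (S - {y} \<union> Xr) \<inter> Y"
      then show "{a,b} \<in> ?R" using disj S Xr by (auto simp: bi_edges_iff)
    next
      fix f assume f: "f \<in> ?R" "f \<subseteq> S - {y} \<union> Xr"
      show "pos f"
      proof (cases "f \<in> bi_edges Xr Y")
        case True
        then obtain a b where ab: "f = {a,b}" "a \<in> Xr" "b \<in> Y" by (auto simp: bi_edges_elem)
        then have "b \<in> S - {y}" using f disj Xr by auto
        then have "b \<noteq> v" using v by auto
        then show ?thesis using P ab by auto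
      next
        case False
        then obtain b where "f = {x0,b}" using f(1) by (auto simp: bi_edges_elem)
        then show ?thesis using f x0 S disj by auto
      qed
    qed
  qed simp
qed

lemma partial_row:
  assumes fin: "finite S" and disj: "X \<inter> Y = {}" and Xr: "Xr \<subseteq> X" and x0: "x0 \<in> X" "x0 \<notin> Xr"
    and S: "S \<subseteq> Y" and v: "v \<notin> S"
    and P: "\<forall>x\<in>Xr. \<forall>y\<in>Y. y \<noteq> v \<longrightarrow> pos {x,y}"
    and C: "chordal X Y (bi_edges Xr Y) pos"
  shows "chordal X Y (bi_edges Xr Y \<union> bi_edges {x0} S) pos"
  using fin S v
proof (induction S rule: finite_induct)
  case empty
  have "bi_edges {x0} {} = {}" unfolding bi_edges_def by auto
  then show ?case using C by simp
next
  case (insert y S)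
  let ?R = "bi_edges Xr Y \<union> bi_edges {x0} (insert y S)"
  have ins: "bi_edges {x0} (insert y S) = insert {x0,y} (bi_edges {x0} S)" unfolding bi_edges_def by auto
  have yY: "y \<in> Y" using insert.prems by auto
  have m1: "{x0,y} \<notin> bi_edges Xr Y" using x0 disj yY by (auto simp: bi_edges_iff)
  have m2: "{x0,y} \<notin> bi_edges {x0} S" using x0 disj yY insert.hyps insert.prems by (auto simp: bi_edges_iff)
  have "?R - {{x0,y}} = bi_edges Xr Y \<union> bi_edges {x0} S"
    unfolding ins using m1 m2 by blast
  moreover have "chordal X Y (bi_edges Xr Y \<union> bi_edges {x0} S) pos"
    using insert by auto
  moreover have "signed_simplicial X Y ?R pos {x0,y}"
    by (rule simp_row[OF disj Xr x0 insert.prems(1)]) (use insert P in auto)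
  ultimately show ?case using chordal_step[of "{x0,y}" ?R X Y pos] by (simp add: bi_edges_iff)
qed

lemma full_row:
  assumes fin: "finite Y" and disj: "X \<inter> Y = {}" and Xr: "Xr \<subseteq> X" and x0: "x0 \<in> X" "x0 \<notin> Xr"
    and v: "v \<in> Y"
    and P: "\<forall>x\<in>Xr. \<forall>y\<in>Y. y \<noteq> v \<longrightarrow> pos {x,y}"
    and C: "chordal X Y (bi_edges Xr Y) pos"
  shows "chordal X Y (bi_edges (insert x0 Xr) Y) pos"
proof -
  let ?R = "bi_edges Xr Y \<union> bi_edges {x0} Y"
  have R: "bi_edges (insert x0 Xr) Y = ?R" unfolding bi_edges_def by auto
  have ins: "bi_edges {x0} Y = insert {x0,v} (bi_edges {x0} (Y - {v}))" using v unfolding bi_edges_def by auto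
  have m1: "{x0,v} \<notin> bi_edges Xr Y" using x0 disj v by (auto simp: bi_edges_iff)
  have m2: "{x0,v} \<notin> bi_edges {x0} (Y - {v})" using x0 disj v by (auto simp: bi_edges_iff)
  have "?R - {{x0,v}} = bi_edges Xr Y \<union> bi_edges {x0} (Y - {v})"
    unfolding ins using m1 m2 by blast
  moreover have "chordal X Y (bi_edges Xr Y \<union> bi_edges {x0} (Y - {v})) pos"
    by (rule partial_row) (use assms in auto)
  moreover have "signed_simplicial X Y ?R pos {x0,v}"
    by (rule simp_row[OF disj Xr x0]) (use assms in auto)
  ultimately show ?thesis unfolding R using chordal_step[of "{x0,v}" ?R X Y pos] by (simp add: bi_edges_iff v x0)
qed

lemma all_rows:
  assumes "finite Xr" "finite Y" "X \<inter> Y = {}" "Xr \<subseteq> X" "v \<in> Y"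
    "\<forall>x\<in>Xr. \<forall>y\<in>Y. y \<noteq> v \<longrightarrow> pos {x,y}"
  shows "chordal X Y (bi_edges Xr Y) pos"
  using assms
proof (induction Xr rule: finite_induct)
  case empty
  have "bi_edges {} Y = {}" unfolding bi_edges_def by auto
  then show ?case using chordal_empty by simp
next
  case (insert x Xr)
  show ?case by (rule full_row) (use insert in auto)
qed

lemma cross_chordal:
  assumes G: "signed_complete_bigraph X Y E" and u: "u \<in> X" and v: "v \<in> Y"
    and cr: "\<forall>x\<in>X. \<forall>y\<in>Y. \<not> pos {x,y} \<longrightarrow> x = u \<or> y = v"
  shows "chordal X Y E pos"
proof -
  have f: "finite X" "finite Y" "X \<inter> Y = {}" "E = bi_edges X Y"
    using G unfolding signed_complete_bigraph_def by auto
  have P: "\<forall>x\<in>X - {u}. \<forall>y\<in>Y. y \<noteq> v \<longrightarrow> pos {x,y}" using cr by auto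
  have "chordal X Y (bi_edges (X - {u}) Y) pos"
    by (rule all_rows) (use f v P in auto)
  then have "chordal X Y (bi_edges (insert u (X - {u})) Y) pos"
    by (intro full_row) (use f v P u in auto)
  then show ?thesis using f u by (simp add: insert_absorb)
qed

lemma Kedges_AB: "{A i, B j} \<in> Kedges m n \<longleftrightarrow> i \<in> {1..m} \<and> j \<in> {1..n}"
  unfolding Kedges_def bi_edges_iff by auto

lemma Kverts_A: "A i \<in> Kverts m n \<longleftrightarrow> i \<in> {1..m}"
  unfolding Kverts_def by auto

lemma Kverts_B: "B i \<in> Kverts m n \<longleftrightarrow> i \<in> {1..n}"
  unfolding Kverts_def by auto

lemma edge_nbr_sym: "edge_nbr E p q = edge_nbr E q p"
  unfolding edge_nbr_def by (auto simp: insert_commute)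

lemma simp_cross_uv:
  assumes E: "E = bi_edges X Y" and disj: "X \<inter> Y = {}" and u: "u \<in> X" and v: "v \<in> Y"
    and PB: "positive_biclique X Y E pos (edge_nbr E u v)"
  shows "\<forall>x\<in>X. \<forall>y\<in>Y. \<not> pos {x,y} \<longrightarrow> x = u \<or> y = v"
proof (intro ballI impI)
  fix x y assume x: "x \<in> X" and y: "y \<in> Y" and np: "\<not> pos {x,y}"
  show "x = u \<or> y = v"
  proof (rule ccontr)
    assume "\<not> (x = u \<or> y = v)"
    then have xu: "x \<noteq> u" and yv: "y \<noteq> v" by auto
    have e1: "{v,x} \<in> E" unfolding E using x v by (simp add: bi_edges_iff)
    have d1: "x \<noteq> v" using x v disj by blast
    have xn: "x \<in> edge_nbr E u v" unfolding edge_nbr_def nbr_def using xu e1 d1 by blast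
    have e2: "{u,y} \<in> E" unfolding E using y u by (simp add: bi_edges_iff)
    have d2: "y \<noteq> u" using y u disj by blast
    have yn: "y \<in> edge_nbr E u v" unfolding edge_nbr_def nbr_def using yv e2 d2 by blast
    have e3: "{x,y} \<in> E" unfolding E using x y by (simp add: bi_edges_iff)
    have "{x,y} \<subseteq> edge_nbr E u v" using xn yn by blast
    then have "pos {x,y}" using PB e3 unfolding positive_biclique_def by blast
    then show False using np by simp
  qed
qed

definition cross :: "'a set \<Rightarrow> 'a set \<Rightarrow> ('a set \<Rightarrow> bool) \<Rightarrow> bool" where
  "cross X Y pos \<longleftrightarrow> (\<exists>u\<in>X. \<exists>v\<in>Y. \<forall>x\<in>X. \<forall>y\<in>Y. \<not> pos {x,y} \<longrightarrow> x = u \<or> y = v)"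

lemma simp_cross:
  assumes E: "E = bi_edges X Y" and disj: "X \<inter> Y = {}"
    and S: "signed_simplicial X Y E pos e"
  shows "cross X Y pos"
proof -
  obtain p q where e: "e \<in> E" "e = {p,q}" and PB: "positive_biclique X Y E pos (edge_nbr E p q)"
    using S unfolding signed_simplicial_def by blast
  from e have "p \<in> X \<and> q \<in> Y \<or> p \<in> Y \<and> q \<in> X" using E by (simp add: bi_edges_iff)
  then show ?thesis
  proof
    assume "p \<in> X \<and> q \<in> Y"
    then show ?thesis unfolding cross_def using simp_cross_uv[OF E disj _ _ PB] by blast
  next
    assume "p \<in> Y \<and> q \<in> X"
    then show ?thesis unfolding cross_def using simp_cross_uv[OF E disj _ _ PB[unfolded edge_nbr_sym[of E p q]]] by blast
  qed
qed

lemma cover_gen: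
  assumes E: "E = bi_edges X Y" and disj: "X \<inter> Y = {}" and u: "u \<in> X" and v: "v \<in> Y"
    and cr: "\<forall>x\<in>X. \<forall>y\<in>Y. \<not> pos {x,y} \<longrightarrow> x = u \<or> y = v"
    and CI: "contains_induced (Kverts m n) (Kedges m n) posH V E pos"
    and FM: "family_member (m,n,negs) posH"
    and negs: "negs \<subseteq> {1..m} \<times> {1..n}" and n1: "1 \<le> n" and m1: "1 \<le> m"
  shows "\<exists>ca cb. (\<forall>(i,j)\<in>negs. ca i \<or> cb j) \<and>
     (\<forall>i\<in>{1..m}. \<forall>i'\<in>{1..m}. ca i \<longrightarrow> ca i' \<longrightarrow> i = i') \<and>
     (\<forall>j\<in>{1..n}. \<forall>j'\<in>{1..n}. cb j \<longrightarrow> cb j' \<longrightarrow> j = j')"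
proof -
  obtain \<phi> where inj: "inj_on \<phi> (Kverts m n)"
    and all: "\<forall>a \<in> Kverts m n. \<forall>b \<in> Kverts m n.
           ({a, b} \<in> Kedges m n \<longleftrightarrow> {\<phi> a, \<phi> b} \<in> E) \<and>
           ({a, b} \<in> Kedges m n \<longrightarrow> posH {a, b} = pos {\<phi> a, \<phi> b})"
    using CI unfolding contains_induced_def by (elim exE conjE) (rule that)
  have ed: "{a, b} \<in> Kedges m n \<longleftrightarrow> {\<phi> a, \<phi> b} \<in> E" if "a \<in> Kverts m n" "b \<in> Kverts m n" for a b
    using bspec[OF bspec[OF all that(1)] that(2)] that by simp
  have sg: "posH {a, b} = pos {\<phi> a, \<phi> b}" if "a \<in> Kverts m n" "b \<in> Kverts m n" "{a, b} \<in> Kedges m n" for a b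
    using bspec[OF bspec[OF all that(1)] that(2)] that by simp
  have dj: "\<And>x. x \<in> X \<Longrightarrow> x \<notin> Y" using disj by blast
  have adj: "{\<phi> (A i), \<phi> (B j)} \<in> E" if r: "i \<in> {1..m}" "j \<in> {1..n}" for i j
  proof -
    have "{A i, B j} \<in> Kedges m n" using r by (simp add: Kedges_AB)
    moreover have "A i \<in> Kverts m n" "B j \<in> Kverts m n" using r by (auto simp: Kverts_A Kverts_B)
    ultimately show ?thesis using ed[of "A i" "B j"] by simp
  qed
  have noboth: "False" if "{a,w} \<in> E" "{b,w} \<in> E" "a = u" "b = v" for a b w
  proof -
    have "w \<in> Y" using that(1) that(3) u dj unfolding E bi_edges_iff by blast
    moreover have "w \<in> X" using that(2) that(4) v dj unfolding E bi_edges_iff by blast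
    ultimately show False using dj by blast
  qed
  define ca where "ca i = (\<phi> (A i) \<in> {u,v})" for i
  define cb where "cb j = (\<phi> (B j) \<in> {u,v})" for j
  have P1: "ca i \<or> cb j" if ij: "(i,j) \<in> negs" for i j
  proof -
    have r: "i \<in> {1..m}" "j \<in> {1..n}" using ij negs by auto
    have "\<not> posH {A i, B j}" using FM ij unfolding family_member_def by auto
    moreover have "posH {A i, B j} = pos {\<phi> (A i), \<phi> (B j)}"
      using r by (intro sg) (auto simp: Kedges_AB Kverts_A Kverts_B)
    ultimately have np: "\<not> pos {\<phi> (A i), \<phi> (B j)}" by simp
    have np': "\<not> pos {\<phi> (B j), \<phi> (A i)}" using np by (simp add: insert_commute)
    have "\<phi> (A i) \<in> X \<and> \<phi> (B j) \<in> Y \<or> \<phi> (A i) \<in> Y \<and> \<phi> (B j) \<in> X"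
      using adj[OF r] E by (simp add: bi_edges_iff)
    then show ?thesis
    proof
      assume h: "\<phi> (A i) \<in> X \<and> \<phi> (B j) \<in> Y"
      then have "\<phi> (A i) = u \<or> \<phi> (B j) = v" using cr np by blast
      then show ?thesis unfolding ca_def cb_def by blast
    next
      assume h: "\<phi> (A i) \<in> Y \<and> \<phi> (B j) \<in> X"
      then have "\<phi> (B j) = u \<or> \<phi> (A i) = v" using cr np' by blast
      then show ?thesis unfolding ca_def cb_def by blast
    qed
  qed
  have P2: "i = i'" if r: "i \<in> {1..m}" "i' \<in> {1..m}" and c: "ca i" "ca i'" for i i'
  proof (rule ccontr)
    assume ne: "i \<noteq> i'"
    have "A i \<in> Kverts m n" "A i' \<in> Kverts m n" using r by (auto simp: Kverts_A)
    then have d: "\<phi> (A i) \<noteq> \<phi> (A i')" using inj ne unfolding inj_on_def by blast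
    have b1: "1 \<in> {1..n}" using n1 by simp
    have e: "{\<phi> (A i), \<phi> (B 1)} \<in> E" "{\<phi> (A i'), \<phi> (B 1)} \<in> E" using adj[OF r(1) b1] adj[OF r(2) b1] by auto
    have "\<phi> (A i) = u \<and> \<phi> (A i') = v \<or> \<phi> (A i) = v \<and> \<phi> (A i') = u" using c d unfolding ca_def by auto
    then show False using e noboth by metis
  qed
  have P3: "j = j'" if r: "j \<in> {1..n}" "j' \<in> {1..n}" and c: "cb j" "cb j'" for j j'
  proof (rule ccontr)
    assume ne: "j \<noteq> j'"
    have "B j \<in> Kverts m n" "B j' \<in> Kverts m n" using r by (auto simp: Kverts_B)
    then have d: "\<phi> (B j) \<noteq> \<phi> (B j')" using inj ne unfolding inj_on_def by blast
    have a1: "1 \<in> {1..m}" using m1 by simp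
    have e: "{\<phi> (B j), \<phi> (A 1)} \<in> E" "{\<phi> (B j'), \<phi> (A 1)} \<in> E"
      using adj[OF a1 r(1)] adj[OF a1 r(2)] by (auto simp: insert_commute)
    have "\<phi> (B j) = u \<and> \<phi> (B j') = v \<or> \<phi> (B j) = v \<and> \<phi> (B j') = u" using c d unfolding cb_def by auto
    then show False using e noboth by metis
  qed
  show ?thesis
    apply (rule exI[of _ ca], rule exI[of _ cb])
    using P1 P2 P3 by blast
qed

lemma cross_noF_gen:
  assumes E: "E = bi_edges X Y" and disj: "X \<inter> Y = {}"
    and cr: "cross X Y pos"
    and CF: "contains_family (m,n,negs) (X \<union> Y) E pos"
    and negs: "negs \<subseteq> {1..m} \<times> {1..n}" and n1: "1 \<le> n" and m1: "1 \<le> m"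
  shows "\<exists>ca cb. (\<forall>(i,j)\<in>negs. ca i \<or> cb j) \<and>
     (\<forall>i\<in>{1..m}. \<forall>i'\<in>{1..m}. ca i \<longrightarrow> ca i' \<longrightarrow> i = i') \<and>
     (\<forall>j\<in>{1..n}. \<forall>j'\<in>{1..n}. cb j \<longrightarrow> cb j' \<longrightarrow> j = j')"
proof -
  obtain u v where u: "u \<in> X" and v: "v \<in> Y" and c: "\<forall>x\<in>X. \<forall>y\<in>Y. \<not> pos {x,y} \<longrightarrow> x = u \<or> y = v"
    using cr unfolding cross_def by blast
  obtain posH where FM: "family_member (m,n,negs) posH"
    and CI: "contains_induced (Kverts m n) (Kedges m n) posH (X \<union> Y) E pos"
    using CF unfolding contains_family_def by auto
  show ?thesis by (rule cover_gen[OF E disj u v c CI FM negs n1 m1])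
qed

lemma cross_noF:
  assumes E: "E = bi_edges X Y" and disj: "X \<inter> Y = {}"
    and cr: "cross X Y pos"
  shows "\<not> (\<exists>F \<in> {F1, F2, F3, F4}. contains_family F (X \<union> Y) E pos)"
proof
  assume "\<exists>F \<in> {F1, F2, F3, F4}. contains_family F (X \<union> Y) E pos"
  then consider "contains_family F1 (X \<union> Y) E pos" | "contains_family F2 (X \<union> Y) E pos"
    | "contains_family F3 (X \<union> Y) E pos" | "contains_family F4 (X \<union> Y) E pos" by blast
  then show False
  proof cases
    case 1
    have ng1: "{(1,1), (1,2), (2,1), (2,2)} \<subseteq> {1..2::nat} \<times> {1..2::nat}" by auto
    obtain ca cb where N: "\<forall>(i,j)\<in>{(1,1), (1,2), (2,1), (2,2)}. ca i \<or> cb j"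
      and U: "\<forall>i\<in>{1..2::nat}. \<forall>i'\<in>{1..2}. ca i \<longrightarrow> ca i' \<longrightarrow> i = i'"
      and V: "\<forall>j\<in>{1..2::nat}. \<forall>j'\<in>{1..2}. cb j \<longrightarrow> cb j' \<longrightarrow> j = j'"
      using cross_noF_gen[OF E disj cr 1[unfolded F1_def] ng1 one_le_numeral one_le_numeral]
      by blast
    have "\<not> (ca 1 \<and> ca 2)" using U[rule_format, of 1 2] by auto
    moreover have "\<not> (cb 1 \<and> cb 2)" using V[rule_format, of 1 2] by auto
    ultimately show False using N by auto
  next
    case 2
    have ng2: "{(1,1), (1,2), (2,2), (2,3)} \<subseteq> {1..2::nat} \<times> {1..3::nat}" by auto
    obtain ca cb where N: "\<forall>(i,j)\<in>{(1,1), (1,2), (2,2), (2,3)}. ca i \<or> cb j"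
      and U: "\<forall>i\<in>{1..2::nat}. \<forall>i'\<in>{1..2}. ca i \<longrightarrow> ca i' \<longrightarrow> i = i'"
      and V: "\<forall>j\<in>{1..3::nat}. \<forall>j'\<in>{1..3}. cb j \<longrightarrow> cb j' \<longrightarrow> j = j'"
      using cross_noF_gen[OF E disj cr 2[unfolded F2_def] ng2 one_le_numeral one_le_numeral]
      by blast
    have "\<not> (ca 1 \<and> ca 2)" using U[rule_format, of 1 2] by auto
    moreover have "\<not> (cb 1 \<and> cb 2)" using V[rule_format, of 1 2] by auto
    moreover have "\<not> (cb 2 \<and> cb 3)" using V[rule_format, of 2 3] by auto
    ultimately show False using N by auto
  next
    case 3
    have ng3: "{(1,1), (1,2), (2,3), (2,4)} \<subseteq> {1..2::nat} \<times> {1..4::nat}" by auto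
    obtain ca cb where N: "\<forall>(i,j)\<in>{(1,1), (1,2), (2,3), (2,4)}. ca i \<or> cb j"
      and U: "\<forall>i\<in>{1..2::nat}. \<forall>i'\<in>{1..2}. ca i \<longrightarrow> ca i' \<longrightarrow> i = i'"
      and V: "\<forall>j\<in>{1..4::nat}. \<forall>j'\<in>{1..4}. cb j \<longrightarrow> cb j' \<longrightarrow> j = j'"
      using cross_noF_gen[OF E disj cr 3[unfolded F3_def] ng3 one_le_numeral one_le_numeral]
      by blast
    have "\<not> (ca 1 \<and> ca 2)" using U[rule_format, of 1 2] by auto
    moreover have "\<not> (cb 1 \<and> cb 2)" using V[rule_format, of 1 2] by auto
    moreover have "\<not> (cb 3 \<and> cb 4)" using V[rule_format, of 3 4] by auto
    ultimately show False using N by auto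
  next
    case 4
    have ng4: "{(1,1), (2,2), (3,3)} \<subseteq> {1..3::nat} \<times> {1..3::nat}" by auto
    obtain ca cb where N: "\<forall>(i,j)\<in>{(1,1), (2,2), (3,3)}. ca i \<or> cb j"
      and U: "\<forall>i\<in>{1..3::nat}. \<forall>i'\<in>{1..3}. ca i \<longrightarrow> ca i' \<longrightarrow> i = i'"
      and V: "\<forall>j\<in>{1..3::nat}. \<forall>j'\<in>{1..3}. cb j \<longrightarrow> cb j' \<longrightarrow> j = j'"
      using cross_noF_gen[OF E disj cr 4[unfolded F4_def] ng4 one_le_numeral one_le_numeral]
      by blast
    have "\<not> (ca 1 \<and> ca 2)" "\<not> (ca 1 \<and> ca 3)" "\<not> (ca 2 \<and> ca 3)"
      using U[rule_format, of 1 2] U[rule_format, of 1 3] U[rule_format, of 2 3] by auto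
    moreover have "\<not> (cb 1 \<and> cb 2)" "\<not> (cb 1 \<and> cb 3)" "\<not> (cb 2 \<and> cb 3)"
      using V[rule_format, of 1 2] V[rule_format, of 1 3] V[rule_format, of 2 3] by auto
    ultimately show False using N by auto
  qed
qed

lemma embed:
  assumes E: "E = bi_edges X Y" and disj: "X \<inter> Y = {}"
    and ST: "(S = X \<and> T = Y) \<or> (S = Y \<and> T = X)"
    and fa: "inj_on fa {1..m}" "fa ` {1..m} \<subseteq> S"
    and fb: "inj_on fb {1..n}" "fb ` {1..n} \<subseteq> T"
    and ng: "\<forall>(i,j)\<in>negs. \<not> pos {fa i, fb j}"
  shows "contains_family (m,n,negs) (X \<union> Y) E pos"
proof -
  define \<phi> where "\<phi> = (\<lambda>w. case w of A i \<Rightarrow> fa i | B j \<Rightarrow> fb j)"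
  define posH where "posH = (\<lambda>f. pos (\<phi> ` f))"
  have STd: "S \<inter> T = {}" and STu: "S \<union> T = X \<union> Y" using ST disj by auto
  have Eiff: "{p,q} \<in> E \<longleftrightarrow> (p \<in> S \<and> q \<in> T \<or> p \<in> T \<and> q \<in> S)" for p q
    using ST unfolding E bi_edges_iff by auto
  have KV: "w \<in> Kverts m n \<longleftrightarrow> (\<exists>i\<in>{1..m}. w = A i) \<or> (\<exists>j\<in>{1..n}. w = B j)" for w
    unfolding Kverts_def by auto
  have KE: "{p,q} \<in> Kedges m n \<longleftrightarrow> ((\<exists>i\<in>{1..m}. p = A i) \<and> (\<exists>j\<in>{1..n}. q = B j)) \<or>
      ((\<exists>j\<in>{1..n}. p = B j) \<and> (\<exists>i\<in>{1..m}. q = A i))" for p q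
    unfolding Kedges_def bi_edges_iff by auto
  have pS: "\<phi> w \<in> S" if "w \<in> Kverts m n" "\<exists>i. w = A i" for w
    using that fa unfolding KV \<phi>_def by auto
  have pT: "\<phi> w \<in> T" if "w \<in> Kverts m n" "\<exists>j. w = B j" for w
    using that fb unfolding KV \<phi>_def by auto
  have AorB: "(\<exists>i. w = A i) \<or> (\<exists>j. w = B j)" for w by (cases w) auto
  have notboth: "\<not> ((\<exists>i. w = A i) \<and> (\<exists>j. w = B j))" for w by (cases w) auto
  have sideS: "\<phi> w \<in> S \<longleftrightarrow> (\<exists>i. w = A i)" if "w \<in> Kverts m n" for w
    using pS pT STd AorB that by blast
  have sideT: "\<phi> w \<in> T \<longleftrightarrow> (\<exists>j. w = B j)" if "w \<in> Kverts m n" for w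
    using pS pT STd AorB that by blast
  have KE': "{p,q} \<in> Kedges m n \<longleftrightarrow> ((\<exists>i. p = A i) \<and> (\<exists>j. q = B j)) \<or>
      ((\<exists>j. p = B j) \<and> (\<exists>i. q = A i))" if "p \<in> Kverts m n" "q \<in> Kverts m n" for p q
    using that unfolding KE KV by auto
  have inj: "inj_on \<phi> (Kverts m n)"
  proof (rule inj_onI)
    fix p q assume p: "p \<in> Kverts m n" and q: "q \<in> Kverts m n" and eq: "\<phi> p = \<phi> q"
    show "p = q"
    proof (cases p)
      case (A i)
      then have "\<phi> q \<in> S" using sideS[OF p] eq by auto
      then obtain i' where "q = A i'" using sideS[OF q] by auto
      moreover have "i \<in> {1..m}" "i' \<in> {1..m}" using A p q \<open>q = A i'\<close> Kverts_A by auto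
      moreover have "fa i = fa i'" using eq A \<open>q = A i'\<close> unfolding \<phi>_def by simp
      ultimately show ?thesis using A inj_onD[OF fa(1)] by auto
    next
      case (B j)
      then have "\<phi> q \<in> T" using sideT[OF p] eq by auto
      then obtain j' where "q = B j'" using sideT[OF q] by auto
      moreover have "j \<in> {1..n}" "j' \<in> {1..n}" using B p q \<open>q = B j'\<close> Kverts_B by auto
      moreover have "fb j = fb j'" using eq B \<open>q = B j'\<close> unfolding \<phi>_def by simp
      ultimately show ?thesis using B inj_onD[OF fb(1)] by auto
    qed
  qed
  have img: "\<phi> ` Kverts m n \<subseteq> X \<union> Y"
  proof
    fix z assume "z \<in> \<phi> ` Kverts m n"
    then obtain w where w: "w \<in> Kverts m n" "z = \<phi> w" by auto
    then have "z \<in> S \<union> T" using pS pT AorB by blast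
    then show "z \<in> X \<union> Y" using STu by simp
  qed
  have edges: "({a, b} \<in> Kedges m n \<longleftrightarrow> {\<phi> a, \<phi> b} \<in> E)" if "a \<in> Kverts m n" "b \<in> Kverts m n" for a b
    unfolding Eiff KE'[OF that] sideS[OF that(1)] sideS[OF that(2)] sideT[OF that(1)] sideT[OF that(2)] ..
  have CI: "contains_induced (Kverts m n) (Kedges m n) posH (X \<union> Y) E pos"
    unfolding contains_induced_def
  proof (intro exI[of _ \<phi>] conjI ballI)
    fix a b assume ab: "a \<in> Kverts m n" "b \<in> Kverts m n"
    show "{a, b} \<in> Kedges m n \<longleftrightarrow> {\<phi> a, \<phi> b} \<in> E" by (rule edges[OF ab])
    show "{a, b} \<in> Kedges m n \<longrightarrow> posH {a, b} = pos {\<phi> a, \<phi> b}" by (simp add: posH_def)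
  qed (rule inj, rule img)
  have FM: "family_member (m,n,negs) posH"
    unfolding family_member_def posH_def \<phi>_def using ng by auto
  show ?thesis unfolding contains_family_def using CI FM by (simp only: prod.case) blast
qed

lemma inj_nth: "distinct xs \<Longrightarrow> inj_on (\<lambda>i. xs ! (i - 1)) {1..length xs}"
  unfolding inj_on_def by (auto simp: nth_eq_iff_index_eq)

lemma img_nth: "set xs \<subseteq> S \<Longrightarrow> (\<lambda>i. xs ! (i - 1)) ` {1..length xs} \<subseteq> S"
proof
  fix z assume "set xs \<subseteq> S" "z \<in> (\<lambda>i. xs ! (i - 1)) ` {1..length xs}"
  then obtain i where "i \<in> {1..length xs}" "z = xs ! (i - 1)" by auto
  then have "z \<in> set xs" by auto
  then show "z \<in> S" using \<open>set xs \<subseteq> S\<close> by auto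
qed

lemma embed_list:
  assumes E: "E = bi_edges X Y" and disj: "X \<inter> Y = {}"
    and ST: "(S = X \<and> T = Y) \<or> (S = Y \<and> T = X)"
    and d: "distinct as" "distinct bs" and s: "set as \<subseteq> S" "set bs \<subseteq> T"
    and ng: "\<forall>(i,j)\<in>negs. \<not> pos {as ! (i - 1), bs ! (j - 1)}"
  shows "contains_family (length as, length bs, negs) (X \<union> Y) E pos"
  by (rule embed[OF E disj ST inj_nth[OF d(1)] img_nth[OF s(1)] inj_nth[OF d(2)] img_nth[OF s(2)]])
     (use ng in auto)

lemma embF1:
  assumes E: "E = bi_edges X Y" and disj: "X \<inter> Y = {}"
    and ST: "(S = X \<and> T = Y) \<or> (S = Y \<and> T = X)"
    and "a1 \<in> S" "a2 \<in> S" "a1 \<noteq> a2" "b1 \<in> T" "b2 \<in> T" "b1 \<noteq> b2"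
    and "\<not> pos {a1,b1}" "\<not> pos {a1,b2}" "\<not> pos {a2,b1}" "\<not> pos {a2,b2}"
  shows "contains_family F1 (X \<union> Y) E pos"
  using embed_list[OF E disj ST, of "[a1,a2]" "[b1,b2]" "{(1,1), (1,2), (2,1), (2,2)}"] assms
  unfolding F1_def by (simp add: numeral_2_eq_2)

lemma embF2:
  assumes E: "E = bi_edges X Y" and disj: "X \<inter> Y = {}"
    and ST: "(S = X \<and> T = Y) \<or> (S = Y \<and> T = X)"
    and "a1 \<in> S" "a2 \<in> S" "a1 \<noteq> a2" "b1 \<in> T" "b2 \<in> T" "b3 \<in> T" "b1 \<noteq> b2" "b1 \<noteq> b3" "b2 \<noteq> b3"
    and "\<not> pos {a1,b1}" "\<not> pos {a1,b2}" "\<not> pos {a2,b2}" "\<not> pos {a2,b3}"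
  shows "contains_family F2 (X \<union> Y) E pos"
  using embed_list[OF E disj ST, of "[a1,a2]" "[b1,b2,b3]" "{(1,1), (1,2), (2,2), (2,3)}"] assms
  unfolding F2_def by (simp add: numeral_2_eq_2 numeral_3_eq_3)

lemma embF3:
  assumes E: "E = bi_edges X Y" and disj: "X \<inter> Y = {}"
    and ST: "(S = X \<and> T = Y) \<or> (S = Y \<and> T = X)"
    and "a1 \<in> S" "a2 \<in> S" "a1 \<noteq> a2" "b1 \<in> T" "b2 \<in> T" "b3 \<in> T" "b4 \<in> T"
    "b1 \<noteq> b2" "b1 \<noteq> b3" "b1 \<noteq> b4" "b2 \<noteq> b3" "b2 \<noteq> b4" "b3 \<noteq> b4"
    and "\<not> pos {a1,b1}" "\<not> pos {a1,b2}" "\<not> pos {a2,b3}" "\<not> pos {a2,b4}"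
  shows "contains_family F3 (X \<union> Y) E pos"
proof -
  have 4: "(4::nat) = Suc 3" by simp
  show ?thesis
  using embed_list[OF E disj ST, of "[a1,a2]" "[b1,b2,b3,b4]" "{(1,1), (1,2), (2,3), (2,4)}"] assms
  unfolding F3_def by (simp add: numeral_2_eq_2 numeral_3_eq_3 4)
qed

lemma embF4:
  assumes E: "E = bi_edges X Y" and disj: "X \<inter> Y = {}"
    and ST: "(S = X \<and> T = Y) \<or> (S = Y \<and> T = X)"
    and "a1 \<in> S" "a2 \<in> S" "a3 \<in> S" "a1 \<noteq> a2" "a1 \<noteq> a3" "a2 \<noteq> a3"
    "b1 \<in> T" "b2 \<in> T" "b3 \<in> T" "b1 \<noteq> b2" "b1 \<noteq> b3" "b2 \<noteq> b3"
    and "\<not> pos {a1,b1}" "\<not> pos {a2,b2}" "\<not> pos {a3,b3}"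
  shows "contains_family F4 (X \<union> Y) E pos"
  using embed_list[OF E disj ST, of "[a1,a2,a3]" "[b1,b2,b3]" "{(1,1), (2,2), (3,3)}"] assms
  unfolding F4_def by (simp add: numeral_2_eq_2 numeral_3_eq_3)

lemma nocross:
  assumes E: "E = bi_edges X Y" and disj: "X \<inter> Y = {}" and X: "X \<noteq> {}" and Y: "Y \<noteq> {}"
    and ncr: "\<not> cross X Y pos"
    and noF: "\<not> (\<exists>F \<in> {F1, F2, F3, F4}. contains_family F (X \<union> Y) E pos)"
  shows False
proof -
  have STx: "(X = X \<and> Y = Y) \<or> (X = Y \<and> Y = X)" by simp
  have STy: "(Y = X \<and> X = Y) \<or> (Y = Y \<and> X = X)" by simp
  have nF1: "contains_family F1 (X \<union> Y) E pos \<Longrightarrow> False" using noF by blast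
  have nF2: "contains_family F2 (X \<union> Y) E pos \<Longrightarrow> False" using noF by blast
  have nF3: "contains_family F3 (X \<union> Y) E pos \<Longrightarrow> False" using noF by blast
  have nF4: "contains_family F4 (X \<union> Y) E pos \<Longrightarrow> False" using noF by blast
  have nc: "\<exists>x\<in>X. \<exists>y\<in>Y. \<not> pos {x,y} \<and> x \<noteq> u \<and> y \<noteq> v" if "u \<in> X" "v \<in> Y" for u v
    using ncr that unfolding cross_def by blast
  have no4: False if "a1 \<in> X" "a2 \<in> X" "a3 \<in> X" "a1 \<noteq> a2" "a1 \<noteq> a3" "a2 \<noteq> a3"
    "b1 \<in> Y" "b2 \<in> Y" "b3 \<in> Y" "b1 \<noteq> b2" "b1 \<noteq> b3" "b2 \<noteq> b3"
    "\<not> pos {a1,b1}" "\<not> pos {a2,b2}" "\<not> pos {a3,b3}" for a1 a2 a3 b1 b2 b3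
    by (rule nF4, rule embF4[OF E disj STx that])
  have no1: False if "a1 \<in> X" "a2 \<in> X" "a1 \<noteq> a2" "b1 \<in> Y" "b2 \<in> Y" "b1 \<noteq> b2"
    "\<not> pos {a1,b1}" "\<not> pos {a1,b2}" "\<not> pos {a2,b1}" "\<not> pos {a2,b2}" for a1 a2 b1 b2
    by (rule nF1, rule embF1[OF E disj STx that])
  have no2X: False if "a1 \<in> X" "a2 \<in> X" "a1 \<noteq> a2" "b1 \<in> Y" "b2 \<in> Y" "b3 \<in> Y" "b1 \<noteq> b2" "b1 \<noteq> b3" "b2 \<noteq> b3"
    "\<not> pos {a1,b1}" "\<not> pos {a1,b2}" "\<not> pos {a2,b2}" "\<not> pos {a2,b3}" for a1 a2 b1 b2 b3
    by (rule nF2, rule embF2[OF E disj STx that])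
  have no2Y: False if "a1 \<in> Y" "a2 \<in> Y" "a1 \<noteq> a2" "b1 \<in> X" "b2 \<in> X" "b3 \<in> X" "b1 \<noteq> b2" "b1 \<noteq> b3" "b2 \<noteq> b3"
    "\<not> pos {b1,a1}" "\<not> pos {b2,a1}" "\<not> pos {b2,a2}" "\<not> pos {b3,a2}" for a1 a2 b1 b2 b3
    by (rule nF2, rule embF2[OF E disj STy that(1-9)]) (use that(10-13) in \<open>simp_all add: insert_commute\<close>)
  have no3X: False if "a1 \<in> X" "a2 \<in> X" "a1 \<noteq> a2" "b1 \<in> Y" "b2 \<in> Y" "b3 \<in> Y" "b4 \<in> Y"
    "b1 \<noteq> b2" "b1 \<noteq> b3" "b1 \<noteq> b4" "b2 \<noteq> b3" "b2 \<noteq> b4" "b3 \<noteq> b4"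
    "\<not> pos {a1,b1}" "\<not> pos {a1,b2}" "\<not> pos {a2,b3}" "\<not> pos {a2,b4}" for a1 a2 b1 b2 b3 b4
    by (rule nF3, rule embF3[OF E disj STx that])
  have no3Y: False if "a1 \<in> Y" "a2 \<in> Y" "a1 \<noteq> a2" "b1 \<in> X" "b2 \<in> X" "b3 \<in> X" "b4 \<in> X"
    "b1 \<noteq> b2" "b1 \<noteq> b3" "b1 \<noteq> b4" "b2 \<noteq> b3" "b2 \<noteq> b4" "b3 \<noteq> b4"
    "\<not> pos {b1,a1}" "\<not> pos {b2,a1}" "\<not> pos {b3,a2}" "\<not> pos {b4,a2}" for a1 a2 b1 b2 b3 b4
    by (rule nF3, rule embF3[OF E disj STy that(1-13)]) (use that(14-17) in \<open>simp_all add: insert_commute\<close>)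
  obtain u0 v0 where "u0 \<in> X" "v0 \<in> Y" using X Y by blast
  then obtain x1 y1 where x1: "x1 \<in> X" and y1: "y1 \<in> Y" and n11: "\<not> pos {x1,y1}" using nc by blast
  obtain x2 y2 where x2: "x2 \<in> X" and y2: "y2 \<in> Y" and n22: "\<not> pos {x2,y2}" and d12: "x2 \<noteq> x1" "y2 \<noteq> y1"
    using nc[OF x1 y1] by blast
  have touch: "x = x1 \<or> x = x2 \<or> y = y1 \<or> y = y2" if "x \<in> X" "y \<in> Y" "\<not> pos {x,y}" for x y
  proof (rule ccontr)
    assume "\<not> (x = x1 \<or> x = x2 \<or> y = y1 \<or> y = y2)"
    then show False using no4[of x1 x2 x y1 y2 y] x1 x2 y1 y2 n11 n22 d12 that by auto
  qed
  obtain x3 y3 where x3: "x3 \<in> X" and y3: "y3 \<in> Y" and n33: "\<not> pos {x3,y3}" and d3: "x3 \<noteq> x1" "y3 \<noteq> y2"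
    using nc[OF x1 y2] by blast
  obtain x4 y4 where x4: "x4 \<in> X" and y4: "y4 \<in> Y" and n44: "\<not> pos {x4,y4}" and d4: "x4 \<noteq> x2" "y4 \<noteq> y1"
    using nc[OF x2 y1] by blast
  have t3: "x3 = x2 \<or> y3 = y1" using touch[OF x3 y3 n33] d3 by auto
  have t4: "x4 = x1 \<or> y4 = y2" using touch[OF x4 y4 n44] d4 by auto
  note V = x1 y1 x2 y2 x3 y3 x4 y4 n11 n22 n33 n44 d12 d3 d4
  show False
  proof (cases "x3 = x2")
    case c3: True
    show False
    proof (cases "x4 = x1")
      case c4: True
      consider "y4 = y2" "y3 = y1" | "y4 = y2" "y3 \<noteq> y1" | "y4 \<noteq> y2" "y3 = y1"
        | "y4 \<noteq> y2" "y3 \<noteq> y1" "y3 = y4" | "y4 \<noteq> y2" "y3 \<noteq> y1" "y3 \<noteq> y4" by blast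
      then show False
      proof cases
        case 1 then show False using no1[of x1 x2 y1 y2] V c3 c4 by auto
      next
        case 2 then show False using no2X[of x1 x2 y1 y2 y3] V c3 c4 by auto
      next
        case 3 then show False using no2X[of x1 x2 y4 y1 y2] V c3 c4 by auto
      next
        case 4 then show False using no2X[of x1 x2 y1 y4 y2] V c3 c4 by auto
      next
        case 5 then show False using no3X[of x1 x2 y1 y4 y2 y3] V c3 c4 by auto
      qed
    next
      case c4: False
      then have e4: "y4 = y2" using t4 by auto
      show False
      proof (cases "y3 = y1")
        case True then show False using no2Y[of y1 y2 x1 x2 x4] V c3 c4 e4 by auto
      next
        case False then show False using no4[of x1 x2 x4 y1 y3 y2] V c3 c4 e4 by auto
      qed
    qed
  next
    case c3: False
    then have e3: "y3 = y1" using t3 by auto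
    show False
    proof (cases "x4 = x1")
      case c4: True
      show False
      proof (cases "y4 = y2")
        case True then show False using no2Y[of y1 y2 x3 x1 x2] V c3 c4 e3 by auto
      next
        case False then show False using no4[of x3 x1 x2 y1 y4 y2] V c3 c4 e3 by auto
      qed
    next
      case c4: False
      then have e4: "y4 = y2" using t4 by auto
      show False
      proof (cases "x3 = x4")
        case True then show False using no2Y[of y1 y2 x1 x3 x2] V c3 c4 e3 e4 by auto
      next
        case False then show False using no3Y[of y1 y2 x1 x3 x2 x4] V c3 c4 e3 e4 by auto
      qed
    qed
  qed
qed

theorem theorem2p2:
  fixes X Y :: "'a set" and E :: "'a set set" and pos :: "'a set \<Rightarrow> bool"
  assumes "signed_complete_bigraph X Y E"
  shows "chordal X Y E pos \<longleftrightarrow>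
           \<not> (\<exists>F \<in> {F1, F2, F3, F4}. contains_family F (X \<union> Y) E pos)"
proof -
  have f: "finite X" "finite Y" and disj: "X \<inter> Y = {}" and E: "E = bi_edges X Y"
    using assms unfolding signed_complete_bigraph_def by auto
  show ?thesis
  proof
    assume ch: "chordal X Y E pos"
    show "\<not> (\<exists>F \<in> {F1, F2, F3, F4}. contains_family F (X \<union> Y) E pos)"
    proof (cases "E = {}")
      case True
      have "X = {} \<or> Y = {}"
      proof (rule ccontr)
        assume "\<not> (X = {} \<or> Y = {})"
        then obtain x y where "x \<in> X" "y \<in> Y" by blast
        then have "{x,y} \<in> E" unfolding E by (simp add: bi_edges_iff)
        then show False using True by simp
      qed
      have cr: "\<not> contains_family (m,n,negs) (X \<union> Y) E pos" if "1 \<le> m" "1 \<le> n" for m n negs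
      proof (rule notI)
        assume "contains_family (m,n,negs) (X \<union> Y) E pos"
        then obtain posH \<phi> where "\<forall>a \<in> Kverts m n. \<forall>b \<in> Kverts m n.
           ({a, b} \<in> Kedges m n \<longleftrightarrow> {\<phi> a, \<phi> b} \<in> E)"
          unfolding contains_family_def contains_induced_def by auto
        moreover have "A 1 \<in> Kverts m n" "B 1 \<in> Kverts m n" "{A 1, B 1} \<in> Kedges m n"
          using that by (auto simp: Kverts_A Kverts_B Kedges_AB)
        ultimately have "{\<phi> (A 1), \<phi> (B 1)} \<in> E" by blast
        then show False using \<open>E = {}\<close> by simp
      qed
      show ?thesis unfolding F1_def F2_def F3_def F4_def using cr by auto
    next
      case False
      then obtain es where es: "distinct es" "set es = E"
        "\<forall>i<length es. signed_simplicial X Y (E - set (take i es)) pos (es ! i)"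
        using ch unfolding chordal_def by blast
      have "es \<noteq> []" using False es by auto
      then have "signed_simplicial X Y E pos (es ! 0)" using es(3) by auto
      then have "cross X Y pos" by (rule simp_cross[OF E disj])
      then show ?thesis by (rule cross_noF[OF E disj])
    qed
  next
    assume noF: "\<not> (\<exists>F \<in> {F1, F2, F3, F4}. contains_family F (X \<union> Y) E pos)"
    show "chordal X Y E pos"
    proof (cases "X = {} \<or> Y = {}")
      case True
      then have "E = {}" unfolding E bi_edges_def by auto
      then show ?thesis using chordal_empty by simp
    next
      case False
      then have "cross X Y pos" using nocross[OF E disj _ _ _ noF] by blast
      then obtain u v where "u \<in> X" "v \<in> Y" "\<forall>x\<in>X. \<forall>y\<in>Y. \<not> pos {x,y} \<longrightarrow> x = u \<or> y = v"
        unfolding cross_def by blast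
      then show ?thesis using cross_chordal[OF assms] by blast
    qed
  qed
qed

end
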